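(* Let $\rho$ be a congruence on $\mathcal{OR}_n$ with $\rho(0)=\mathcal I_k$ for some $k\in\{0,1,\dots,m-1\}$, and let $\sigma\in\mathcal{OR}_n$ with $\mathrm{rk}(\sigma)>k+1$. Then for every $\tau\in\mathcal{OR}_n$, $\tau\,\rho\,\sigma$ if and only if $\tau=\sigma$.
   Context: Let $m\ge 1$, $n=2m$, $\mathbf n=\{1,\dots,n\}$, $\theta(i)=n+1-i$, written $\bar i$. A proper subset $I\subset\mathbf n$ is admissible if $I\cap\theta(I)=\emptyset$; $\mathbf n$ and $\emptyset$ are also admissible. For an injective partial map $\sigma$ of $\mathbf n$, $I(\sigma)$ is its domain, $J(\sigma)$ its image, $\mathrm{rk}(\sigma)=|I(\sigma)|$; products are compositions of partial maps. $W=\{\sigma\in S_n:\sigma(\bar i)=\overline{\sigma(i)}\ \forall i\}$, $W'=\{\sigma\in W:|\sigma(\{1,\dots,m\})\cap\{m+1,\dots,n\}|\text{ even}\}$. An admissible $m$-subset is of type I if it contains an even number of elements $>m$, type II otherwise. $\mathcal{OR}_n$ consists of the injective partial maps $\sigma$ with: $\mathrm{rk}(\sigma)<m$ and $I(\sigma),J(\sigma)$ admissible; or $\mathrm{rk}(\sigma)=m$ and $I(\sigma),J(\sigma)$ admissible of the same type; or $\sigma\in W'$. $\mathcal I_k=\{\sigma\in\mathcal{OR}_n:\mathrm{rk}(\sigma)\le k\}$. $0$ is the empty map and $\rho(0)$ its $\rho$-class. *)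

theory Defs
  imports Main
begin

text \<open>Partial maps of n = 2m, represented as maps nat to nat option.
  The product of partial maps is composition; we use map_comp.
  (Congruences are compatible on both sides, so the order convention is irrelevant.)\<close>

type_synonym pmap = "nat \<rightharpoonup> nat"

definition nn :: "nat \<Rightarrow> nat" where "nn m = 2 * m"

definition theta :: "nat \<Rightarrow> nat \<Rightarrow> nat" where
  "theta m i = nn m + 1 - i"

definition admissible :: "nat \<Rightarrow> nat set \<Rightarrow> bool" where
  "admissible m I \<longleftrightarrow> I = {1..nn m} \<or> I = {} \<or>
     (I \<subset> {1..nn m} \<and> I \<inter> theta m ` I = {})"

definition pinj :: "nat \<Rightarrow> pmap \<Rightarrow> bool" where
  "pinj m \<sigma> \<longleftrightarrow> dom \<sigma> \<subseteq> {1..nn m} \<and> ran \<sigma> \<subseteq> {1..nn m} \<and> inj_on \<sigma> (dom \<sigma>)"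

definition rk :: "pmap \<Rightarrow> nat" where "rk \<sigma> = card (dom \<sigma>)"

definition pimg :: "pmap \<Rightarrow> nat set \<Rightarrow> nat set" where
  "pimg \<sigma> A = {j. \<exists>i\<in>A. \<sigma> i = Some j}"

definition Wgrp :: "nat \<Rightarrow> pmap set" where
  "Wgrp m = {\<sigma>. pinj m \<sigma> \<and> dom \<sigma> = {1..nn m} \<and> ran \<sigma> = {1..nn m} \<and>
      (\<forall>i\<in>{1..nn m}. \<sigma> (theta m i) = map_option (theta m) (\<sigma> i))}"

definition Wprime :: "nat \<Rightarrow> pmap set" where
  "Wprime m = {\<sigma>\<in>Wgrp m. even (card (pimg \<sigma> {1..m} \<inter> {m+1..nn m}))}"

definition typeI :: "nat \<Rightarrow> nat set \<Rightarrow> bool" where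
  "typeI m I \<longleftrightarrow> even (card {i\<in>I. i > m})"

definition OR :: "nat \<Rightarrow> pmap set" where
  "OR m = {\<sigma>. pinj m \<sigma> \<and>
      ((rk \<sigma> < m \<and> admissible m (dom \<sigma>) \<and> admissible m (ran \<sigma>)) \<or>
       (rk \<sigma> = m \<and> admissible m (dom \<sigma>) \<and> admissible m (ran \<sigma>) \<and>
          (typeI m (dom \<sigma>) \<longleftrightarrow> typeI m (ran \<sigma>))) \<or>
       \<sigma> \<in> Wprime m)}"

definition Ik :: "nat \<Rightarrow> nat \<Rightarrow> pmap set" where
  "Ik m k = {\<sigma>\<in>OR m. rk \<sigma> \<le> k}"

definition congruence_OR :: "nat \<Rightarrow> pmap rel \<Rightarrow> bool" where
  "congruence_OR m \<rho> \<longleftrightarrow> equiv (OR m) \<rho> \<and>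
     (\<forall>a b c. (a, b) \<in> \<rho> \<and> c \<in> OR m \<longrightarrow>
        (c \<circ>\<^sub>m a, c \<circ>\<^sub>m b) \<in> \<rho> \<and> (a \<circ>\<^sub>m c, b \<circ>\<^sub>m c) \<in> \<rho>)"

end

theory Submission
  imports Defs
begin

definition padm :: "nat \<Rightarrow> nat set \<Rightarrow> bool" where
  "padm m B \<longleftrightarrow> B \<subseteq> {1..nn m} \<and> B \<inter> theta m ` B = {}"

definition idm :: "nat set \<Rightarrow> pmap" where
  "idm B = (\<lambda>i. if i \<in> B then Some i else None)"

lemma theta_in: "i \<in> {1..nn m} \<Longrightarrow> theta m i \<in> {1..nn m}"
  by (auto simp: theta_def nn_def)

lemma theta_theta: "i \<in> {1..nn m} \<Longrightarrow> theta m (theta m i) = i"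
  by (auto simp: theta_def nn_def)

lemma theta_neq: "theta m i \<noteq> i"
  unfolding theta_def nn_def by presburger

lemma theta_inj: "inj_on (theta m) {1..nn m}"
  by (rule inj_onI) (auto simp: theta_def nn_def)

lemma padm_sub: "padm m B \<Longrightarrow> B' \<subseteq> B \<Longrightarrow> padm m B'"
  unfolding padm_def by blast

lemma padm_card: assumes "padm m B" shows "card B \<le> m" "finite B"
proof -
  have s: "B \<subseteq> {1..nn m}" using assms by (simp add: padm_def)
  show f: "finite B" using s finite_subset by blast
  have inj: "inj_on (theta m) B"
    using theta_inj s inj_on_subset by blast
  have "theta m ` B \<subseteq> {1..nn m}" using s theta_in by blast
  hence "B \<union> theta m ` B \<subseteq> {1..nn m}" using s by blast
  hence "card (B \<union> theta m ` B) \<le> 2*m"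
    by (metis card_atLeastAtMost card_mono diff_Suc_1 finite_atLeastAtMost nn_def)
  moreover have "card (B \<union> theta m ` B) = card B + card B"
    using card_Un_disjoint[of B "theta m ` B"] f assms card_image[OF inj]
    by (simp add: padm_def)
  ultimately show "card B \<le> m" by simp
qed

lemma admissible_padm: "admissible m A \<Longrightarrow> A \<noteq> {1..nn m} \<Longrightarrow> padm m A"
  unfolding admissible_def padm_def by auto

lemma padm_admissible: assumes "m \<ge> 1" "padm m B" shows "admissible m B"
proof -
  have "B \<noteq> {1..nn m}"
  proof
    assume "B = {1..nn m}"
    hence "1 \<in> B" "theta m 1 \<in> B" using assms(1) by (auto simp: nn_def theta_def)
    thus False using assms(2) unfolding padm_def by blast
  qed
  thus ?thesis using assms unfolding admissible_def padm_def by auto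
qed

lemma idm_OR: assumes "m \<ge> 1" "padm m B" shows "idm B \<in> OR m"
proof -
  have dom: "dom (idm B) = B" by (auto simp: idm_def dom_def)
  have ran: "ran (idm B) = B" by (auto simp: idm_def ran_def)
  have "pinj m (idm B)" unfolding pinj_def dom ran using assms(2)
    by (auto simp: padm_def idm_def inj_on_def)
  moreover have "admissible m B" using padm_admissible assms by blast
  moreover have "card B \<le> m" using padm_card assms by blast
  ultimately show ?thesis unfolding OR_def rk_def
    apply (simp only: dom ran mem_Collect_eq)
    by (cases "card B < m") auto
qed

lemma OR_dom: "\<sigma> \<in> OR m \<Longrightarrow> admissible m (dom \<sigma>)"
  unfolding OR_def Wprime_def Wgrp_def admissible_def by auto

lemma OR_ran: "\<sigma> \<in> OR m \<Longrightarrow> admissible m (ran \<sigma>)"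
  unfolding OR_def Wprime_def Wgrp_def admissible_def by auto

definition trans_set :: "nat \<Rightarrow> nat \<Rightarrow> nat \<Rightarrow> nat set" where
  "trans_set m x y = {j\<in>{1..m}. j = x \<or> j = theta m y} \<union>
      theta m ` ({1..m} - {j\<in>{1..m}. j = x \<or> j = theta m y})"

lemma trans_set_props:
  assumes "x \<in> {1..nn m}" "y \<in> {1..nn m}" "x \<noteq> y"
  shows "x \<in> trans_set m x y" "y \<notin> trans_set m x y" "padm m (trans_set m x y)"
    "card (trans_set m x y) = m"
proof -
  define S where "S = {j\<in>{1..m}. j = x \<or> j = theta m y}"
  have T: "trans_set m x y = S \<union> theta m ` ({1..m} - S)" by (simp add: trans_set_def S_def)
  show "x \<in> trans_set m x y"
  proof (cases "x \<le> m")
    case True thus ?thesis using assms by (auto simp: trans_set_def)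
  next
    case False
    hence "theta m x \<in> {1..m} - S" "theta m (theta m x) = x"
      using assms by (auto simp: S_def theta_def nn_def)
    thus ?thesis unfolding T by (metis UnI2 imageI)
  qed
  show "y \<notin> trans_set m x y" unfolding T using assms
    by (auto simp: S_def theta_def nn_def)
  show "padm m (trans_set m x y)" unfolding T padm_def using assms
    by (auto simp: S_def theta_def nn_def)
  have inj: "inj_on (theta m) ({1..m} - S)"
    by (rule inj_onI) (auto simp: theta_def nn_def)
  have "card (S \<union> theta m ` ({1..m} - S)) = card S + card ({1..m} - S)"
    apply (subst card_Un_disjoint)
    using card_image[OF inj] by (auto simp: S_def theta_def nn_def)
  also have "\<dots> = m"
    by (metis (no_types, lifting) S_def card_Diff_subset card_atLeastAtMost diff_Suc_1
        finite_atLeastAtMost le_add_diff_inverse mem_Collect_eq subsetI card_mono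
        finite_subset)
  finally show "card (trans_set m x y) = m" unfolding T .
qed

lemma sub_card:
  assumes "finite A" "x \<in> A" "card A \<ge> Suc k"
  obtains B where "B \<subseteq> A" "x \<in> B" "card B = Suc k"
proof -
  have "card (A - {x}) \<ge> k" using assms by simp
  then obtain B' where "B' \<subseteq> A - {x}" "card B' = k"
    using obtain_subset_with_card_n by metis
  moreover have "finite B'" using calculation assms(1) finite_subset by blast
  moreover have "x \<notin> B'" using calculation by blast
  ultimately show ?thesis using that[of "insert x B'"] assms by auto
qed

lemma big_padm:
  assumes "m \<ge> 1" "\<sigma> \<in> OR m" "x \<in> dom \<sigma>" "k < m" "rk \<sigma> > k"
  obtains B where "padm m B" "B \<subseteq> dom \<sigma>" "x \<in> B" "card B = Suc k"
proof -
  have adm: "admissible m (dom \<sigma>)" using OR_dom assms by blast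
  have sub: "dom \<sigma> \<subseteq> {1..nn m}" using assms(2) by (simp add: OR_def pinj_def)
  obtain A where A: "padm m A" "A \<subseteq> dom \<sigma>" "x \<in> A" "card A \<ge> Suc k"
  proof (cases "dom \<sigma> = {1..nn m}")
    case True
    have "x \<in> {1..nn m}" "theta m x \<in> {1..nn m}" using sub assms(3) theta_in by auto
    moreover have "x \<noteq> theta m x" using theta_neq by metis
    ultimately have "padm m (trans_set m x (theta m x))" "x \<in> trans_set m x (theta m x)"
      "card (trans_set m x (theta m x)) = m"
      using trans_set_props[of x m "theta m x"] by auto
    moreover have "trans_set m x (theta m x) \<subseteq> dom \<sigma>" using calculation(1) True
      by (simp add: padm_def)
    ultimately show ?thesis using that[of "trans_set m x (theta m x)"] assms(4) by auto
  next
    case False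
    then show ?thesis using that[of "dom \<sigma>"] admissible_padm[OF adm] assms by (auto simp: rk_def)
  qed
  obtain B where "B \<subseteq> A" "x \<in> B" "card B = Suc k"
    using sub_card[of A x k] A padm_card by metis
  thus ?thesis using that A padm_sub by blast
qed

theorem lemma4p9:
  fixes m k :: nat and \<rho> :: "pmap rel" and \<sigma> :: pmap
  assumes "m \<ge> 1"
    and "congruence_OR m \<rho>"
    and "k < m"
    and "\<rho> `` {Map.empty} = Ik m k"
    and "\<sigma> \<in> OR m"
    and "rk \<sigma> > k + 1"
  shows "\<forall>\<tau>\<in>OR m. (\<tau>, \<sigma>) \<in> \<rho> \<longleftrightarrow> \<tau> = \<sigma>"
proof -
  have eq: "equiv (OR m) \<rho>" and cl: "\<And>a b c. (a, b) \<in> \<rho> \<Longrightarrow> c \<in> OR m \<Longrightarrow>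
        (c \<circ>\<^sub>m a, c \<circ>\<^sub>m b) \<in> \<rho> \<and> (a \<circ>\<^sub>m c, b \<circ>\<^sub>m c) \<in> \<rho>"
    using assms(2) unfolding congruence_OR_def by blast+
  have inOR: "\<And>a b. (a, b) \<in> \<rho> \<Longrightarrow> a \<in> OR m \<and> b \<in> OR m"
    using eq unfolding equiv_def refl_on_def by blast
  have sy: "\<And>a b. (a, b) \<in> \<rho> \<Longrightarrow> (b, a) \<in> \<rho>"
    using eq unfolding equiv_def by (meson symD)
  have tr: "\<And>a b c. (a, b) \<in> \<rho> \<Longrightarrow> (b, c) \<in> \<rho> \<Longrightarrow> (a, c) \<in> \<rho>"
    using eq unfolding equiv_def by (meson transD)
  have F1: "rk b \<le> k" if "(a, b) \<in> \<rho>" "rk a \<le> k" for a b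
  proof -
    have "a \<in> Ik m k" using that inOR unfolding Ik_def by blast
    hence "(Map.empty, a) \<in> \<rho>" using assms(4) by blast
    hence "(Map.empty, b) \<in> \<rho>" using tr that(1) by blast
    hence "b \<in> Ik m k" using assms(4) by blast
    thus ?thesis unfolding Ik_def by simp
  qed
  have F2: "x \<in> dom b" if ab: "(a, b) \<in> \<rho>" and rka: "rk a > k" and x: "x \<in> dom a" for a b x
  proof (rule ccontr)
    assume nx: "x \<notin> dom b"
    have aOR: "a \<in> OR m" using inOR ab by blast
    obtain B where B: "padm m B" "B \<subseteq> dom a" "x \<in> B" "card B = Suc k"
      using big_padm[OF assms(1) aOR x assms(3) rka] by metis
    have cOR: "idm B \<in> OR m" using idm_OR assms(1) B(1) by blast
    have r: "(a \<circ>\<^sub>m idm B, b \<circ>\<^sub>m idm B) \<in> \<rho>" using cl ab cOR by blast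
    have d1: "dom (a \<circ>\<^sub>m idm B) = B" using B(2) by (auto simp: idm_def map_comp_def dom_def split: option.splits)
    have d2: "dom (b \<circ>\<^sub>m idm B) \<subseteq> B - {x}" using nx by (auto simp: idm_def map_comp_def dom_def split: option.splits)
    have fB: "finite B" using padm_card B(1) by blast
    have "card (dom (b \<circ>\<^sub>m idm B)) \<le> card (B - {x})" using d2 fB
      by (meson card_mono finite_Diff)
    hence "rk (b \<circ>\<^sub>m idm B) \<le> k" using B fB by (simp add: rk_def)
    hence "rk (a \<circ>\<^sub>m idm B) \<le> k" using F1 sy r by blast
    thus False using d1 B by (simp add: rk_def)
  qed
  have rkb: "rk b > k" if "(a, b) \<in> \<rho>" "rk a > k" for a b
    using F1 sy that by (meson not_le)
  show ?thesis
  proof (intro ballI iffI)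
    fix \<tau> assume tOR: "\<tau> \<in> OR m" and ts: "(\<tau>, \<sigma>) \<in> \<rho>"
    have sgt: "rk \<sigma> > k" using assms(6) by simp
    have dom_eq: "dom \<tau> = dom \<sigma>"
      using F2[OF sy[OF ts] sgt] F2[OF ts rkb[OF sy[OF ts] sgt]] by blast
    show "\<tau> = \<sigma>"
    proof (rule ccontr)
      assume "\<tau> \<noteq> \<sigma>"
      then obtain x where x: "\<tau> x \<noteq> \<sigma> x" by blast
      hence "x \<in> dom \<sigma>" using dom_eq by (metis domIff)
      then obtain z y where z: "\<sigma> x = Some z" and y: "\<tau> x = Some y"
        using dom_eq by (metis domD)
      have yz: "y \<noteq> z" using x y z by simp
      have pj: "pinj m \<sigma>" using assms(5) by (simp add: OR_def)
      have pjt: "pinj m \<tau>" using tOR by (simp add: OR_def)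
      have zin: "z \<in> ran \<sigma>" using z by (auto simp: ran_def)
      have yin: "y \<in> {1..nn m}" using pjt y by (auto simp: pinj_def ran_def)
      have fd: "finite (dom \<sigma>)" using pj finite_subset by (auto simp: pinj_def)
      have injs: "inj_on \<sigma> (dom \<sigma>)" using pj by (simp add: pinj_def)
      have cran: "card (ran \<sigma>) = rk \<sigma>"
      proof -
        have "ran \<sigma> = (the \<circ> \<sigma>) ` dom \<sigma>" by (force simp: ran_def dom_def)
        moreover have "inj_on (the \<circ> \<sigma>) (dom \<sigma>)" using injs
          by (auto simp: inj_on_def dom_def)
        ultimately show ?thesis unfolding rk_def by (metis card_image)
      qed
      obtain C where C: "padm m C" "C \<subseteq> ran \<sigma>" "z \<in> C" "y \<notin> C" "card C \<ge> Suc k"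
      proof (cases "ran \<sigma> = {1..nn m}")
        case True
        have zr: "z \<in> {1..nn m}" using zin True by simp
        have P: "padm m (trans_set m z y)" "z \<in> trans_set m z y" "y \<notin> trans_set m z y"
          "card (trans_set m z y) = m"
          using trans_set_props[of z m y] zr yin yz by auto
        have "trans_set m z y \<subseteq> ran \<sigma>" using P(1) True unfolding padm_def by blast
        thus ?thesis using that[of "trans_set m z y"] P assms(3) by simp
      next
        case False
        have pr: "padm m (ran \<sigma>)" using admissible_padm[OF OR_ran[OF assms(5)] False] .
        have "finite (ran \<sigma>)" using padm_card pr by blast
        hence "card (ran \<sigma> - {y}) = (if y \<in> ran \<sigma> then card (ran \<sigma>) - 1 else card (ran \<sigma>))"
          by (simp only: card_Diff_singleton_if)
        hence c: "card (ran \<sigma> - {y}) \<ge> Suc k" using cran assms(6)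
          by (simp split: if_splits)
        have s1: "padm m (ran \<sigma> - {y})" using padm_sub[OF pr] by blast
        have s2: "ran \<sigma> - {y} \<subseteq> ran \<sigma>" "z \<in> ran \<sigma> - {y}" "y \<notin> ran \<sigma> - {y}"
          using zin yz by auto
        show ?thesis using that[OF s1 s2 c] .
      qed
      have cOR: "idm C \<in> OR m" using idm_OR assms(1) C(1) by blast
      have r: "(idm C \<circ>\<^sub>m \<tau>, idm C \<circ>\<^sub>m \<sigma>) \<in> \<rho>" using cl ts cOR by blast
      define P where "P = {i\<in>dom \<sigma>. the (\<sigma> i) \<in> C}"
      have dP: "dom (idm C \<circ>\<^sub>m \<sigma>) = P"
        by (auto simp: P_def idm_def map_comp_def dom_def split: option.splits if_splits)
      have "(the \<circ> \<sigma>) ` P = C"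
      proof
        show "(the \<circ> \<sigma>) ` P \<subseteq> C" by (auto simp: P_def)
        show "C \<subseteq> (the \<circ> \<sigma>) ` P"
        proof
          fix c assume "c \<in> C"
          then obtain i where "\<sigma> i = Some c" using C(2) by (auto simp: ran_def)
          thus "c \<in> (the \<circ> \<sigma>) ` P" using \<open>c \<in> C\<close> unfolding P_def
            by (simp add: domI image_iff) (metis domI option.sel)
        qed
      qed
      moreover have "inj_on (the \<circ> \<sigma>) P" using injs
        by (auto simp: inj_on_def dom_def P_def)
      ultimately have "card P = card C" by (metis card_image)
      hence rkP: "rk (idm C \<circ>\<^sub>m \<sigma>) > k" using C dP by (simp add: rk_def)
      have "x \<in> P" using z C(3) \<open>x \<in> dom \<sigma>\<close> by (simp add: P_def)
      hence "x \<in> dom (idm C \<circ>\<^sub>m \<tau>)" using F2[OF sy[OF r] rkP] dP by blast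
      thus False using y C(4) by (auto simp: idm_def map_comp_def dom_def)
    qed
  next
    fix \<tau> assume "\<tau> \<in> OR m" "\<tau> = \<sigma>"
    thus "(\<tau>, \<sigma>) \<in> \<rho>" using eq unfolding equiv_def refl_on_def by blast
  qed
qed

end
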